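(* Let $n,m\ge 5$ be integers with $m\equiv 2\pmod 4$ and $n\equiv 2\pmod 4$. Then $\gamma_p(C_n\times C_m)\le\frac{(n+2)(m+2)}{4}-6$.
   Context: All graphs are finite, simple and undirected. $C_n$ denotes the cycle of order $n$ and $G\times H$ the Cartesian product of graphs. For a graph $G$ without isolated vertices, a set $D\subseteq V(G)$ is a paired dominating set if every vertex outside $D$ has a neighbour in $D$ and the induced subgraph $G[D]$ has a perfect matching; $\gamma_p(G)$ is the minimum size of a paired dominating set. *)

theory Defs
  imports Complex_Main
begin

text \<open>A finite simple graph is given by a vertex set V and a symmetric,
irreflexive adjacency relation adj (only its restriction to V matters).\<close>

definition dominating :: "'a set \<Rightarrow> ('a \<Rightarrow> 'a \<Rightarrow> bool) \<Rightarrow> 'a set \<Rightarrow> bool" where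
  "dominating V adj D \<longleftrightarrow> D \<subseteq> V \<and> (\<forall>v \<in> V - D. \<exists>u \<in> D. adj v u)"

definition has_perfect_matching :: "('a \<Rightarrow> 'a \<Rightarrow> bool) \<Rightarrow> 'a set \<Rightarrow> bool" where
  "has_perfect_matching adj D \<longleftrightarrow>
     (\<exists>M. (\<forall>e \<in> M. \<exists>u v. e = {u, v} \<and> u \<in> D \<and> v \<in> D \<and> u \<noteq> v \<and> adj u v)
        \<and> (\<forall>e1 \<in> M. \<forall>e2 \<in> M. e1 \<noteq> e2 \<longrightarrow> e1 \<inter> e2 = {})
        \<and> \<Union>M = D)"

definition paired_dominating :: "'a set \<Rightarrow> ('a \<Rightarrow> 'a \<Rightarrow> bool) \<Rightarrow> 'a set \<Rightarrow> bool" where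
  "paired_dominating V adj D \<longleftrightarrow> dominating V adj D \<and> has_perfect_matching adj D"

definition gamma_p :: "'a set \<Rightarrow> ('a \<Rightarrow> 'a \<Rightarrow> bool) \<Rightarrow> nat" where
  "gamma_p V adj = (LEAST k. \<exists>D. paired_dominating V adj D \<and> card D = k)"

definition cycle_adj :: "nat \<Rightarrow> nat \<Rightarrow> nat \<Rightarrow> bool" where
  "cycle_adj n i j \<longleftrightarrow> i < n \<and> j < n \<and> (j = (i + 1) mod n \<or> i = (j + 1) mod n)"

definition cart_adj :: "('a \<Rightarrow> 'a \<Rightarrow> bool) \<Rightarrow> ('b \<Rightarrow> 'b \<Rightarrow> bool) \<Rightarrow> 'a \<times> 'b \<Rightarrow> 'a \<times> 'b \<Rightarrow> bool" where
  "cart_adj adj1 adj2 x y \<longleftrightarrow>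
     (fst x = fst y \<and> adj2 (snd x) (snd y)) \<or> (snd x = snd y \<and> adj1 (fst x) (fst y))"

end

theory Submission
  imports Defs
begin
definition inD :: "nat \<Rightarrow> nat \<Rightarrow> nat \<Rightarrow> nat \<Rightarrow> bool" where
"inD a b i j \<longleftrightarrow> (j mod 4 = 1 \<and> j + 3 \<le> 4*b \<and> (i mod 4 = 1 \<or> i mod 4 = 2 \<or> i = 0))
 \<or> ((j mod 4 = 3 \<or> j = 4*b+1) \<and> (i mod 4 = 3 \<or> i mod 4 = 0) \<and> i \<noteq> 0)
 \<or> (j mod 4 = 0 \<and> 0 < j \<and> j < 4*b \<and> i < 2)
 \<or> (j = 4*b \<and> (i mod 4 = 0 \<or> i mod 4 = 1) \<and> i < 4*a)"

lemma inD_P: "j mod 4 = 1 \<Longrightarrow> j + 3 \<le> 4*b \<Longrightarrow> inD a b i j \<longleftrightarrow> (i mod 4 = 1 \<or> i mod 4 = 2 \<or> i = 0)"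
  unfolding inD_def by auto
lemma inD_Q: "j mod 4 = 3 \<or> j = 4*b+1 \<Longrightarrow> inD a b i j \<longleftrightarrow> ((i mod 4 = 3 \<or> i mod 4 = 0) \<and> i \<noteq> 0)"
  unfolding inD_def by auto
lemma inD_Z: "j mod 4 = 0 \<Longrightarrow> 0 < j \<Longrightarrow> j < 4*b \<Longrightarrow> inD a b i j \<longleftrightarrow> i < 2"
  unfolding inD_def by auto
lemma inD_R: "j = 4*b \<Longrightarrow> inD a b i j \<longleftrightarrow> ((i mod 4 = 0 \<or> i mod 4 = 1) \<and> i < 4*a)"
  unfolding inD_def by auto
lemma ic: "(i::nat) mod 4 = 0 \<or> i mod 4 = 1 \<or> i mod 4 = 2 \<or> i mod 4 = 3" by presburger
definition nbr :: "nat \<Rightarrow> nat \<Rightarrow> nat \<Rightarrow> nat \<Rightarrow> bool" where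
"nbr a b i j \<longleftrightarrow> inD a b (if i = 4*a+1 then 0 else i+1) j \<or> inD a b (if i = 0 then 4*a+1 else i-1) j
   \<or> inD a b i (if j=4*b+1 then 0 else j+1) \<or> inD a b i (if j=0 then 4*b+1 else j-1)"



lemma pred_mod: "(i::nat) mod 4 = Suc r \<Longrightarrow> (i - 1) mod 4 = r"
  by (cases i) (auto simp: mod_Suc split: if_splits)
lemma pred_mod0: "(i::nat) mod 4 = 0 \<Longrightarrow> i \<ge> 1 \<Longrightarrow> (i - 1) mod 4 = 3"
  by (cases i) (auto simp: mod_Suc split: if_splits)

lemma dom_J0: assumes "b \<ge> 1" "j = 0" shows "nbr a b i j"
proof -
  have m: "(1::nat) mod 4 = 1" "1 + 3 \<le> 4*b" using assms(1) by auto
  have "inD a b i 1 \<longleftrightarrow> (i mod 4 = 1 \<or> i mod 4 = 2 \<or> i = 0)" by (rule inD_P[OF m])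
  moreover have "inD a b i (4*b+1) \<longleftrightarrow> ((i mod 4 = 3 \<or> i mod 4 = 0) \<and> i \<noteq> 0)" by (rule inD_Q) simp
  ultimately have "inD a b i 1 \<or> inD a b i (4*b+1)" using ic[of i] by auto
  then show ?thesis using assms unfolding nbr_def by auto
qed

lemma dom_J1: assumes "j mod 4 = 1" "j + 3 \<le> 4*b" "\<not> inD a b i j" shows "nbr a b i j"
proof -
  have ni: "i \<noteq> 0" "i mod 4 = 0 \<or> i mod 4 = 3" using assms ic[of i] by (auto simp: inD_P)
  show ?thesis
  proof (cases "i mod 4 = 3")
    case True
    then have "(i-1) mod 4 = 2" using pred_mod[of i 2] by simp
    then have "inD a b (i-1) j" using assms by (simp add: inD_P)
    then show ?thesis using ni unfolding nbr_def by auto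
  next
    case False
    then have "i mod 4 = 0" using ni by auto
    then have "(i+1) mod 4 = 1" "i \<noteq> 4*a+1" by presburger+
    then have "inD a b (i+1) j" using assms by (simp add: inD_P)
    then show ?thesis using \<open>i \<noteq> 4*a+1\<close> unfolding nbr_def by auto
  qed
qed

lemma dom_J2: assumes "j mod 4 = 2" "j < 4*b+2" shows "nbr a b i j"
proof -
  have "j \<noteq> 0" "j \<noteq> 4*b+1" "j + 2 \<le> 4*b" "(j+1) mod 4 = 3" using assms by presburger+
  have "(j-1) mod 4 = 1" using pred_mod[of j 1] assms(1) by simp
  have "j - 1 + 3 \<le> 4*b" using \<open>j + 2 \<le> 4*b\<close> \<open>j \<noteq> 0\<close> by arith
  have "inD a b i (j-1) \<or> inD a b i (j+1)"
    using ic[of i] \<open>(j-1) mod 4 = 1\<close> \<open>j - 1 + 3 \<le> 4*b\<close> \<open>(j+1) mod 4 = 3\<close> by (auto simp: inD_P inD_Q)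
  then show ?thesis using \<open>j \<noteq> 0\<close> \<open>j \<noteq> 4*b+1\<close> unfolding nbr_def by auto
qed

lemma dom_J3: assumes "j mod 4 = 3 \<or> j = 4*b+1" "j < 4*b+2" "a \<ge> 1" "\<not> inD a b i j" shows "nbr a b i j"
proof -
  have ni: "i = 0 \<or> i mod 4 = 1 \<or> i mod 4 = 2" using assms ic[of i] by (auto simp: inD_Q)
  show ?thesis
  proof (cases "i mod 4 = 2")
    case True
    then have "(i+1) mod 4 = 3" "i \<noteq> 4*a+1" by presburger+
    then have "inD a b (i+1) j" using assms(1) by (simp add: inD_Q)
    then show ?thesis using \<open>i \<noteq> 4*a+1\<close> unfolding nbr_def by auto
  next
    case F2: False
    show ?thesis
    proof (cases "i \<ge> 5")
      case True
      then have "i mod 4 = 1" using ni F2 by auto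
      then have "(i-1) mod 4 = 0" using pred_mod[of i 0] by simp
      moreover have "i - 1 \<noteq> 0" using True by arith
      ultimately have "inD a b (i-1) j" using assms(1) by (simp add: inD_Q)
      then show ?thesis using True unfolding nbr_def by auto
    next
      case False
      then have i01: "i = 0 \<or> i = 1" using ni F2 by presburger
      then have r: "(i mod 4 = 0 \<or> i mod 4 = 1) \<and> i < 4*a" "i < 2" using assms(3) by auto
      have iR: "inD a b i (4*b)" using r by (simp add: inD_R)
      show ?thesis
      proof (cases "j = 4*b+1")
        case True
        then show ?thesis using iR unfolding nbr_def by auto
      next
        case False
        then have j3: "j mod 4 = 3" using assms(1) by auto
        then have "j + 1 \<le> 4*b" "(j+1) mod 4 = 0" using assms(2) by presburger+
        show ?thesis
        proof (cases "j + 1 = 4*b")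
          case True
          then show ?thesis using iR False unfolding nbr_def by auto
        next
          case F3: False
          have "inD a b i (j+1)" using r \<open>(j+1) mod 4 = 0\<close> F3 \<open>j + 1 \<le> 4*b\<close> by (simp add: inD_Z)
          then show ?thesis using False unfolding nbr_def by auto
        qed
      qed
    qed
  qed
qed

lemma dom_J4: assumes "j mod 4 = 0" "0 < j" "j < 4*b" shows "nbr a b i j"
proof -
  have "(j+1) mod 4 = 1" "j + 1 + 3 \<le> 4*b" "j \<noteq> 4*b+1" using assms by presburger+
  have "(j - 1) mod 4 = 3" using pred_mod0[of j] assms by simp
  then have "inD a b i (j-1) \<or> inD a b i (j+1)"
    using ic[of i] \<open>(j+1) mod 4 = 1\<close> \<open>j + 1 + 3 \<le> 4*b\<close> by (auto simp: inD_P inD_Q)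
  then show ?thesis using assms \<open>j \<noteq> 4*b+1\<close> unfolding nbr_def by auto
qed

lemma dom_J5: assumes "j = 4*b" "b \<ge> 1" "a \<ge> 1" "i < 4*a+2" "\<not> inD a b i j" shows "nbr a b i j"
proof -
  have ni: "i mod 4 = 2 \<or> i mod 4 = 3 \<or> i \<ge> 4*a" using assms ic[of i] by (auto simp: inD_R)
  have jn: "j \<noteq> 4*b+1" "j \<noteq> 0" using assms(1,2) by auto
  have jn3: "(j-1) mod 4 = 3" using pred_mod0[of j] assms(1,2) by simp
  show ?thesis
  proof (cases "i = 4*a+1")
    case True
    have "inD a b 0 j" using assms by (simp add: inD_R)
    then show ?thesis using True unfolding nbr_def by auto
  next
    case F1: False
    show ?thesis
    proof (cases "i mod 4 = 2")
      case True
      then have "(i-1) mod 4 = 1" using pred_mod[of i 1] by simp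
      have "i + 2 \<le> 4*a" using True assms(4) by presburger
      then have "i - 1 < 4*a" "i \<noteq> 0" using True by auto
      then have "inD a b (i-1) j" using assms(1) \<open>(i-1) mod 4 = 1\<close> by (simp add: inD_R)
      then show ?thesis using \<open>i \<noteq> 0\<close> unfolding nbr_def by auto
    next
      case False
      then have "(i mod 4 = 3 \<or> i mod 4 = 0) \<and> i \<noteq> 0" using ni F1 assms(4,3) by presburger
      then have "inD a b i (j-1)" using jn3 by (simp add: inD_Q)
      then show ?thesis using jn unfolding nbr_def by auto
    qed
  qed
qed
lemma nbr_all: assumes "i < 4*a+2" "j < 4*b+2" "a \<ge> 1" "b \<ge> 1" "\<not> inD a b i j"
  shows "nbr a b i j"
proof -
  have jc: "j = 0 \<or> (j mod 4 = 1 \<and> j + 3 \<le> 4*b) \<or> (j mod 4 = 2) \<or> (j mod 4 = 3 \<or> j = 4*b+1)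
     \<or> (j mod 4 = 0 \<and> 0 < j \<and> j < 4*b) \<or> j = 4*b" using assms(2) by presburger
  then show ?thesis
  proof (elim disjE)
  qed (use assms dom_J0[of b j a i] dom_J1[of j b a i] dom_J2[of j b a i] dom_J3[of j b a i]
      dom_J4[of j b a i] dom_J5[of j b a i] in auto)
qed

definition cc :: "nat \<Rightarrow> nat \<Rightarrow> nat" where
  "cc b j = (if j mod 4 = 1 \<and> j + 3 \<le> 4*b then 1 else if j mod 4 = 3 \<or> j = 4*b+1 then 3 else 0)"

definition pr :: "nat \<Rightarrow> nat \<Rightarrow> nat \<Rightarrow> nat \<Rightarrow> nat" where
  "pr a b i j = (if i mod 4 = cc b j then (if i = 4*a+1 then 0 else i+1) else (if i = 0 then 4*a+1 else i-1))"

definition pok :: "nat \<Rightarrow> nat \<Rightarrow> nat \<Rightarrow> nat \<Rightarrow> bool" where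
  "pok a b i j \<longleftrightarrow> pr a b i j < 4*a+2 \<and> inD a b (pr a b i j) j \<and> pr a b i j \<noteq> i \<and> pr a b (pr a b i j) j = i"

lemma m41: "(4*a+1) mod 4 = (1::nat)" by simp

lemma pok_P: assumes "j mod 4 = 1" "j + 3 \<le> 4*b" "i < 4*a+2" "inD a b i j" shows "pok a b i j"
proof -
  have c: "cc b j = 1" using assms unfolding cc_def by auto
  have ii: "i mod 4 = 1 \<or> i mod 4 = 2 \<or> i = 0" using assms by (simp add: inD_P)
  have iP: "\<And>x. inD a b x j \<longleftrightarrow> (x mod 4 = 1 \<or> x mod 4 = 2 \<or> x = 0)" by (rule inD_P[OF assms(1,2)])
  show ?thesis
  proof (cases "i = 4*a+1")
    case True
    then show ?thesis unfolding pok_def pr_def c using iP by (simp add: m41)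
  next
    case F: False
    show ?thesis
    proof (cases "i mod 4 = 1")
      case True
      then have "(i+1) mod 4 = 2" "i + 1 < 4*a+2" using F assms(3) by presburger+
      then show ?thesis unfolding pok_def pr_def c using iP True F by simp
    next
      case F1: False
      show ?thesis
      proof (cases "i = 0")
        case True
        then show ?thesis unfolding pok_def pr_def c using iP by (simp add: m41)
      next
        case False
        then have "i mod 4 = 2" using ii F1 by auto
        then have "(i-1) mod 4 = 1" using pred_mod[of i 1] by simp
        moreover have "i - 1 \<noteq> 4*a+1" "i - 1 \<noteq> 0" "i - 1 + 1 = i" "0 < i" "i - 1 \<noteq> i" "i - 1 < 4*a+2" using assms(3) \<open>i mod 4 = 2\<close> False by auto
        ultimately show ?thesis unfolding pok_def pr_def c using iP \<open>i mod 4 = 2\<close> assms(3) by simp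
      qed
    qed
  qed
qed

lemma pok_Q: assumes "j mod 4 = 3 \<or> j = 4*b+1" "i < 4*a+2" "inD a b i j" shows "pok a b i j"
proof -
  have c: "cc b j = 3" using assms unfolding cc_def by auto
  have ii: "(i mod 4 = 3 \<or> i mod 4 = 0) \<and> i \<noteq> 0" using assms by (simp add: inD_Q)
  have iQ: "\<And>x. inD a b x j \<longleftrightarrow> ((x mod 4 = 3 \<or> x mod 4 = 0) \<and> x \<noteq> 0)" using assms(1) by (rule inD_Q)
  show ?thesis
  proof (cases "i mod 4 = 3")
    case True
    then have "(i+1) mod 4 = 0" "i + 1 < 4*a+2" "i \<noteq> 4*a+1" using assms(2) by presburger+
    then show ?thesis unfolding pok_def pr_def c using iQ True by simp
  next
    case False
    then have "i mod 4 = 0" using ii by auto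
    then have "(i-1) mod 4 = 3" using pred_mod0[of i] ii by simp
    moreover have "i - 1 \<noteq> 4*a+1" "i - 1 \<noteq> 0" "i - 1 + 1 = i" "0 < i" "i - 1 \<noteq> i" "i - 1 < 4*a+2" using assms(2) \<open>i mod 4 = 0\<close> ii by auto
    ultimately show ?thesis unfolding pok_def pr_def c using iQ \<open>i mod 4 = 0\<close> assms(2) ii by simp
  qed
qed

lemma pok_Z: assumes "j mod 4 = 0" "0 < j" "j < 4*b" "a \<ge> 1" "inD a b i j" shows "pok a b i j"
proof -
  have c: "cc b j = 0" using assms unfolding cc_def by auto
  have ii: "i < 2" using assms by (simp add: inD_Z)
  have iZ: "\<And>x. inD a b x j \<longleftrightarrow> x < 2" by (rule inD_Z[OF assms(1-3)])
  show ?thesis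
    using ii assms(4) unfolding pok_def pr_def c iZ by (cases "i = 0") auto
qed

lemma pok_R: assumes "j = 4*b" "i < 4*a+2" "inD a b i j" shows "pok a b i j"
proof -
  have c: "cc b j = 0" using assms unfolding cc_def by auto
  have ii: "(i mod 4 = 0 \<or> i mod 4 = 1) \<and> i < 4*a" using assms by (simp add: inD_R)
  have iR: "\<And>x. inD a b x j \<longleftrightarrow> ((x mod 4 = 0 \<or> x mod 4 = 1) \<and> x < 4*a)" using assms(1) by (rule inD_R)
  show ?thesis
  proof (cases "i mod 4 = 0")
    case True
    then have "(i+1) mod 4 = 1" "i + 1 < 4*a" "i \<noteq> 4*a+1" using ii by presburger+
    then show ?thesis unfolding pok_def pr_def c using iR True by simp
  next
    case False
    then have "i mod 4 = 1" using ii by auto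
    then have "(i-1) mod 4 = 0" using pred_mod[of i 0] by simp
    moreover have "i - 1 \<noteq> 4*a+1" "i \<noteq> 0" "i - 1 < 4*a" "i - 1 + 1 = i" "0 < i" "i - 1 \<noteq> i" using ii \<open>i mod 4 = 1\<close> by auto
    ultimately show ?thesis unfolding pok_def pr_def c using iR \<open>i mod 4 = 1\<close> by simp
  qed
qed

lemma pok_all: assumes "i < 4*a+2" "j < 4*b+2" "a \<ge> 1" "b \<ge> 1" "inD a b i j"
  shows "pok a b i j"
proof -
  have jc: "j = 0 \<or> (j mod 4 = 1 \<and> j + 3 \<le> 4*b) \<or> (j mod 4 = 2) \<or> (j mod 4 = 3 \<or> j = 4*b+1)
     \<or> (j mod 4 = 0 \<and> 0 < j \<and> j < 4*b) \<or> j = 4*b" using assms(2) by presburger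
  have "\<not> inD a b i j" if "j = 0 \<or> j mod 4 = 2" using that assms(4) unfolding inD_def by auto
  with jc show ?thesis
  proof (elim disjE)
  qed (use assms pok_P[of j b i a] pok_Q[of j b i a] pok_Z[of j b a i] pok_R[of j b i a] in auto)
qed
lemma pm_inv:
  assumes "\<forall>v\<in>D. f v \<in> D \<and> f v \<noteq> v \<and> f (f v) = v \<and> adj v (f v)"
  shows "has_perfect_matching adj D"
  unfolding has_perfect_matching_def
proof (intro exI[of _ "(\<lambda>v. {v, f v}) ` D"] conjI ballI impI)
  fix e assume "e \<in> (\<lambda>v. {v, f v}) ` D"
  then obtain v where "v \<in> D" "e = {v, f v}" by auto
  then show "\<exists>u v. e = {u, v} \<and> u \<in> D \<and> v \<in> D \<and> u \<noteq> v \<and> adj u v" using assms by metis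
next
  fix e1 e2 assume e1: "e1 \<in> (\<lambda>v. {v, f v}) ` D" and e2: "e2 \<in> (\<lambda>v. {v, f v}) ` D" and ne: "e1 \<noteq> e2"
  then obtain v w where v: "v \<in> D" "e1 = {v, f v}" and w: "w \<in> D" "e2 = {w, f w}" by auto
  show "e1 \<inter> e2 = {}"
  proof (rule ccontr)
    assume "e1 \<inter> e2 \<noteq> {}"
    then have "v = w \<or> v = f w \<or> f v = w \<or> f v = f w" using v w by auto
    then have "e1 = e2" using v w assms by (metis insert_commute)
    then show False using ne by simp
  qed
next
  show "\<Union> ((\<lambda>v. {v, f v}) ` D) = D" using assms by auto
qed

lemma cyc_succ: "i < 4*a+2 \<Longrightarrow> cycle_adj (4*a+2) i (if i = 4*a+1 then 0 else i+1)"
  unfolding cycle_adj_def by auto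
lemma cyc_pred: "i < 4*a+2 \<Longrightarrow> cycle_adj (4*a+2) i (if i = 0 then 4*a+1 else i-1)"
  unfolding cycle_adj_def by auto

definition Dset :: "nat \<Rightarrow> nat \<Rightarrow> (nat \<times> nat) set" where
  "Dset a b = {(i,j). i < 4*a+2 \<and> j < 4*b+2 \<and> inD a b i j}"

lemma Dset_dom:
  assumes "a \<ge> 1" "b \<ge> 1"
  shows "dominating ({0..<4*a+2} \<times> {0..<4*b+2}) (cart_adj (cycle_adj (4*a+2)) (cycle_adj (4*b+2))) (Dset a b)"
  unfolding dominating_def
proof (intro conjI ballI)
  show "Dset a b \<subseteq> {0..<4*a+2} \<times> {0..<4*b+2}" unfolding Dset_def by auto
next
  fix v assume v: "v \<in> {0..<4*a+2} \<times> {0..<4*b+2} - Dset a b"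
  obtain i j where ij: "v = (i,j)" by force
  have ij2: "i < 4*a+2" "j < 4*b+2" "\<not> inD a b i j" using v ij unfolding Dset_def by auto
  have N: "nbr a b i j" using nbr_all[OF ij2(1,2) assms ij2(3)] .
  let ?adj = "cart_adj (cycle_adj (4*a+2)) (cycle_adj (4*b+2))"
  let ?i1 = "if i = 4*a+1 then 0 else i+1"
  let ?i2 = "if i = 0 then 4*a+1 else i-1"
  let ?j1 = "if j = 4*b+1 then 0 else j+1"
  let ?j2 = "if j = 0 then 4*b+1 else j-1"
  have b1: "?i1 < 4*a+2" "?i2 < 4*a+2" "?j1 < 4*b+2" "?j2 < 4*b+2" using ij2 by auto
  have a1: "?adj (i,j) (?i1, j)" "?adj (i,j) (?i2, j)" "?adj (i,j) (i, ?j1)" "?adj (i,j) (i, ?j2)"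
    unfolding cart_adj_def using cyc_succ[OF ij2(1)] cyc_pred[OF ij2(1)] cyc_succ[OF ij2(2)] cyc_pred[OF ij2(2)]
    by auto
  from N show "\<exists>u\<in>Dset a b. ?adj v u"
    unfolding nbr_def
  proof (elim disjE)
    assume "inD a b ?i1 j" then show ?thesis using a1 b1 ij ij2 unfolding Dset_def by blast
  next
    assume "inD a b ?i2 j" then show ?thesis using a1 b1 ij ij2 unfolding Dset_def by blast
  next
    assume "inD a b i ?j1" then show ?thesis using a1 b1 ij ij2 unfolding Dset_def by blast
  next
    assume "inD a b i ?j2" then show ?thesis using a1 b1 ij ij2 unfolding Dset_def by blast
  qed
qed

lemma Dset_pm:
  assumes "a \<ge> 1" "b \<ge> 1"
  shows "has_perfect_matching (cart_adj (cycle_adj (4*a+2)) (cycle_adj (4*b+2))) (Dset a b)"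
proof (rule pm_inv[where f = "\<lambda>(i,j). (pr a b i j, j)"], intro ballI)
  fix v assume v: "v \<in> Dset a b"
  obtain i j where ij: "v = (i,j)" by force
  have ij2: "i < 4*a+2" "j < 4*b+2" "inD a b i j" using v ij unfolding Dset_def by auto
  have P: "pok a b i j" by (rule pok_all[OF ij2(1,2) assms ij2(3)])
  have adj: "cycle_adj (4*a+2) i (pr a b i j)"
    unfolding pr_def using cyc_succ[OF ij2(1)] cyc_pred[OF ij2(1)] by auto
  show "(case v of (i, j) \<Rightarrow> (pr a b i j, j)) \<in> Dset a b \<and>
         (case v of (i, j) \<Rightarrow> (pr a b i j, j)) \<noteq> v \<and>
         (case case v of (i, j) \<Rightarrow> (pr a b i j, j) of (i, j) \<Rightarrow> (pr a b i j, j)) = v \<and>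
         cart_adj (cycle_adj (4 * a + 2)) (cycle_adj (4 * b + 2)) v (case v of (i, j) \<Rightarrow> (pr a b i j, j))"
    using P ij ij2 adj unfolding pok_def Dset_def cart_adj_def by auto
qed

definition pc :: "nat \<Rightarrow> nat \<Rightarrow> nat set \<Rightarrow> nat set \<Rightarrow> (nat \<times> nat) set" where
  "pc r q S T = (\<lambda>(s,t). (4*s+r, 4*t+q)) ` (S \<times> T)"

lemma pc_card: "finite S \<Longrightarrow> finite T \<Longrightarrow> card (pc r q S T) \<le> card S * card T"
  unfolding pc_def using card_image_le[of "S \<times> T"] by (simp add: card_cartesian_product)
lemma pc_fin: "finite S \<Longrightarrow> finite T \<Longrightarrow> finite (pc r q S T)"
  unfolding pc_def by simp
lemma pc_mem: "i = 4*s+r \<Longrightarrow> j = 4*t+q \<Longrightarrow> s \<in> S \<Longrightarrow> t \<in> T \<Longrightarrow> (i,j) \<in> pc r q S T"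
  unfolding pc_def by force

lemma card_Union_list: "card (\<Union>(set Ls)) \<le> sum_list (map card Ls)"
proof (induction Ls)
  case Nil then show ?case by simp
next
  case (Cons A Ls)
  have "card (\<Union>(set (A # Ls))) = card (A \<union> \<Union>(set Ls))" by simp
  also have "\<dots> \<le> card A + card (\<Union>(set Ls))" by (rule card_Un_le)
  also have "\<dots> \<le> card A + sum_list (map card Ls)" using Cons by simp
  finally show ?case by simp
qed

definition Ls :: "nat \<Rightarrow> nat \<Rightarrow> (nat \<times> nat) set list" where
  "Ls a b = [pc 1 1 {..<a+1} {..<b}, pc 2 1 {..<a} {..<b}, pc 0 1 {0} {..<b},
     pc 3 3 {..<a} {..<b}, pc 0 3 {1..a} {..<b}, pc 3 1 {..<a} {b}, pc 0 1 {1..a} {b},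
     pc 0 0 {0} {1..<b}, pc 1 0 {0} {1..<b}, pc 0 0 {..<a} {b}, pc 1 0 {..<a} {b}]"

lemma Ls_sum: "b \<ge> 1 \<Longrightarrow> sum_list (map card (Ls a b)) \<le> 4*a*b + 4*a + 4*b - 2"
proof -
  assume b: "b \<ge> 1"
  have c1: "card (pc 1 1 {..<a+1} {..<b}) \<le> a*b + b" using pc_card[of "{..<a+1}" "{..<b}" 1 1] by (simp add: algebra_simps)
  have c2: "card (pc 2 1 {..<a} {..<b}) \<le> a*b" using pc_card[of "{..<a}" "{..<b}" 2 1] by simp
  have c3: "card (pc 0 1 {0} {..<b}) \<le> b" using pc_card[of "{0}" "{..<b}" 0 1] by simp
  have c4: "card (pc 3 3 {..<a} {..<b}) \<le> a*b" using pc_card[of "{..<a}" "{..<b}" 3 3] by simp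
  have c5: "card (pc 0 3 {1..a} {..<b}) \<le> a*b" using pc_card[of "{1..a}" "{..<b}" 0 3] by simp
  have c6: "card (pc 3 1 {..<a} {b}) \<le> a" using pc_card[of "{..<a}" "{b}" 3 1] by simp
  have c7: "card (pc 0 1 {1..a} {b}) \<le> a" using pc_card[of "{1..a}" "{b}" 0 1] by simp
  have c8: "card (pc 0 0 {0} {1..<b}) \<le> b - 1" using pc_card[of "{0}" "{1..<b}" 0 0] by simp
  have c9: "card (pc 1 0 {0} {1..<b}) \<le> b - 1" using pc_card[of "{0}" "{1..<b}" 1 0] by simp
  have c10: "card (pc 0 0 {..<a} {b}) \<le> a" using pc_card[of "{..<a}" "{b}" 0 0] by simp
  have c11: "card (pc 1 0 {..<a} {b}) \<le> a" using pc_card[of "{..<a}" "{b}" 1 0] by simp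
  have e: "sum_list (map card (Ls a b)) = card (pc 1 1 {..<a+1} {..<b}) + (card (pc 2 1 {..<a} {..<b}) +
     (card (pc 0 1 {0} {..<b}) + (card (pc 3 3 {..<a} {..<b}) + (card (pc 0 3 {1..a} {..<b}) +
     (card (pc 3 1 {..<a} {b}) + (card (pc 0 1 {1..a} {b}) + (card (pc 0 0 {0} {1..<b}) +
     (card (pc 1 0 {0} {1..<b}) + (card (pc 0 0 {..<a} {b}) + (card (pc 1 0 {..<a} {b}) + 0))))))))))"
    by (simp only: Ls_def list.map sum_list.Cons sum_list.Nil)
  obtain c where bc: "b = Suc c" using b by (cases b) auto
  have eq: "(a*b + b) + a*b + b + a*b + a*b + a + a + (b-1) + (b-1) + a + a = 4*a*b + 4*a + 4*b - 2"
    unfolding bc by (simp add: algebra_simps)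
  show ?thesis unfolding e using c1 c2 c3 c4 c5 c6 c7 c8 c9 c10 c11 eq by linarith
qed

lemma inL: "(i,j) \<in> A \<Longrightarrow> A \<in> set L \<Longrightarrow> (i,j) \<in> \<Union>(set L)" by blast

lemma Ls_fin: "finite (\<Union>(set (Ls a b)))"
  unfolding Ls_def by (simp add: pc_fin)

lemma Dset_sub: assumes "b \<ge> 1" shows "Dset a b \<subseteq> \<Union>(set (Ls a b))"
proof
  fix v assume v: "v \<in> Dset a b"
  obtain i j where ij: "v = (i,j)" by force
  have ij2: "i < 4*a+2" "j < 4*b+2" "inD a b i j" using v ij unfolding Dset_def by auto
  define s where "s = i div 4"
  define t where "t = j div 4"
  have hi: "i = 4*s + i mod 4" unfolding s_def by simp
  have hj: "j = 4*t + j mod 4" unfolding t_def by simp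
  have U: "\<And>r q S T. pc r q S T \<in> set (Ls a b) \<Longrightarrow> (i,j) \<in> pc r q S T \<Longrightarrow> v \<in> \<Union>(set (Ls a b))"
    using ij by blast
  have jc: "(j mod 4 = 1 \<and> j + 3 \<le> 4*b) \<or> j mod 4 = 3 \<or> j = 4*b+1 \<or> (j mod 4 = 0 \<and> 0 < j \<and> j < 4*b) \<or> j = 4*b"
    using ij2(3) unfolding inD_def by auto
  from jc show "v \<in> \<Union>(set (Ls a b))"
  proof (elim disjE)
    assume jP: "j mod 4 = 1 \<and> j + 3 \<le> 4*b"
    then have tb: "t \<in> {..<b}" "j = 4*t+1" using hj by auto
    have ii: "i mod 4 = 1 \<or> i mod 4 = 2 \<or> i = 0" using ij2(3) jP by (simp add: inD_P)
    then show ?thesis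
    proof (elim disjE)
      assume "i mod 4 = 1" then have "i = 4*s+1" "s \<in> {..<a+1}" using hi ij2(1) by auto
      then have "(i,j) \<in> pc 1 1 {..<a+1} {..<b}" using pc_mem tb by blast
      then show ?thesis unfolding ij by (rule inL) (simp add: Ls_def)
    next
      assume "i mod 4 = 2" then have "i = 4*s+2" "s \<in> {..<a}" using hi ij2(1) by auto
      then have "(i,j) \<in> pc 2 1 {..<a} {..<b}" using pc_mem tb by blast
      then show ?thesis unfolding ij by (rule inL) (simp add: Ls_def)
    next
      assume "i = 0" then have "i = 4*0+0" "(0::nat) \<in> {0}" by auto
      then have "(i,j) \<in> pc 0 1 {0} {..<b}" using pc_mem tb by blast
      then show ?thesis unfolding ij by (rule inL) (simp add: Ls_def)
    qed
  next
    assume j3: "j mod 4 = 3"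
    then have tb: "t \<in> {..<b}" "j = 4*t+3" using hj ij2(2) by auto
    have ii: "(i mod 4 = 3 \<or> i mod 4 = 0) \<and> i \<noteq> 0" using ij2(3) j3 by (simp add: inD_Q)
    then show ?thesis
    proof (elim conjE disjE)
      assume "i mod 4 = 3" then have "i = 4*s+3" "s \<in> {..<a}" using hi ij2(1) by auto
      then have "(i,j) \<in> pc 3 3 {..<a} {..<b}" using pc_mem tb by blast
      then show ?thesis unfolding ij by (rule inL) (simp add: Ls_def)
    next
      assume "i mod 4 = 0" "i \<noteq> 0" then have "i = 4*s+0" "s \<in> {1..a}" using hi ij2(1) by auto
      then have "(i,j) \<in> pc 0 3 {1..a} {..<b}" using pc_mem tb by blast
      then show ?thesis unfolding ij by (rule inL) (simp add: Ls_def)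
    qed
  next
    assume j3: "j = 4*b+1"
    then have tb: "b \<in> {b}" "j = 4*b+1" by auto
    have ii: "(i mod 4 = 3 \<or> i mod 4 = 0) \<and> i \<noteq> 0" using ij2(3) j3 by (simp add: inD_Q)
    then show ?thesis
    proof (elim conjE disjE)
      assume "i mod 4 = 3" then have "i = 4*s+3" "s \<in> {..<a}" using hi ij2(1) by auto
      then have "(i,j) \<in> pc 3 1 {..<a} {b}" using pc_mem tb by blast
      then show ?thesis unfolding ij by (rule inL) (simp add: Ls_def)
    next
      assume "i mod 4 = 0" "i \<noteq> 0" then have "i = 4*s+0" "s \<in> {1..a}" using hi ij2(1) by auto
      then have "(i,j) \<in> pc 0 1 {1..a} {b}" using pc_mem tb by blast
      then show ?thesis unfolding ij by (rule inL) (simp add: Ls_def)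
    qed
  next
    assume jZ: "j mod 4 = 0 \<and> 0 < j \<and> j < 4*b"
    then have tb: "t \<in> {1..<b}" "j = 4*t+0" using hj by auto
    have "i < 2" using ij2(3) jZ by (simp add: inD_Z)
    then have "i = 4*0+0 \<or> i = 4*0+1" by auto
    then show ?thesis
    proof (elim disjE)
      assume "i = 4*0+0"
      then have "(i,j) \<in> pc 0 0 {0} {1..<b}" using pc_mem[of i 0 0 j t 0 "{0}" "{1..<b}"] tb by auto
      then show ?thesis unfolding ij by (rule inL) (simp add: Ls_def)
    next
      assume "i = 4*0+1"
      then have "(i,j) \<in> pc 1 0 {0} {1..<b}" using pc_mem[of i 0 1 j t 0 "{0}" "{1..<b}"] tb by auto
      then show ?thesis unfolding ij by (rule inL) (simp add: Ls_def)
    qed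
  next
    assume jR: "j = 4*b"
    then have tb: "b \<in> {b}" "j = 4*b+0" by auto
    have ii: "(i mod 4 = 0 \<or> i mod 4 = 1) \<and> i < 4*a" using ij2(3) jR by (simp add: inD_R)
    then show ?thesis
    proof (elim conjE disjE)
      assume "i mod 4 = 0" then have "i = 4*s+0" "s \<in> {..<a}" using hi ii by auto
      then have "(i,j) \<in> pc 0 0 {..<a} {b}" using pc_mem tb by blast
      then show ?thesis unfolding ij by (rule inL) (simp add: Ls_def)
    next
      assume "i mod 4 = 1" then have "i = 4*s+1" "s \<in> {..<a}" using hi ii by auto
      then have "(i,j) \<in> pc 1 0 {..<a} {b}" using pc_mem tb by blast
      then show ?thesis unfolding ij by (rule inL) (simp add: Ls_def)
    qed
  qed
qed

lemma Dset_card: assumes "b \<ge> 1" shows "card (Dset a b) \<le> 4*a*b + 4*a + 4*b - 2"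
proof -
  have "card (Dset a b) \<le> card (\<Union>(set (Ls a b)))" by (rule card_mono[OF Ls_fin Dset_sub[OF assms]])
  also have "\<dots> \<le> sum_list (map card (Ls a b))" by (rule card_Union_list)
  also have "\<dots> \<le> 4*a*b + 4*a + 4*b - 2" by (rule Ls_sum[OF assms])
  finally show ?thesis .
qed

lemma gamma_le: "paired_dominating V adj D \<Longrightarrow> gamma_p V adj \<le> card D"
  unfolding gamma_p_def by (rule Least_le) blast

theorem theorem5p5:
  fixes n m :: nat
  assumes "n \<ge> 5" and "m \<ge> 5" and "m mod 4 = 2" and "n mod 4 = 2"
  shows "real (gamma_p ({0..<n} \<times> {0..<m}) (cart_adj (cycle_adj n) (cycle_adj m)))
           \<le> real ((n + 2) * (m + 2)) / 4 - 6"
proof -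
  define a where "a = n div 4"
  define b where "b = m div 4"
  have n: "n = 4*a+2" using div_mult_mod_eq[of n 4] assms(4) unfolding a_def by linarith
  have m: "m = 4*b+2" using div_mult_mod_eq[of m 4] assms(3) unfolding b_def by linarith
  have a1: "a \<ge> 1" using assms(1) n by auto
  have b1: "b \<ge> 1" using assms(2) m by auto
  have pd: "paired_dominating ({0..<n} \<times> {0..<m}) (cart_adj (cycle_adj n) (cycle_adj m)) (Dset a b)"
    unfolding paired_dominating_def n m using Dset_dom[OF a1 b1] Dset_pm[OF a1 b1] by simp
  have g: "gamma_p ({0..<n} \<times> {0..<m}) (cart_adj (cycle_adj n) (cycle_adj m)) \<le> 4*a*b + 4*a + 4*b - 2"
    using gamma_le[OF pd] Dset_card[OF b1, of a] by linarith
  have e: "real (4*a*b + 4*a + 4*b - 2) = 4*real a*real b + 4*real a + 4*real b - 2"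
    using a1 by (simp add: of_nat_diff)
  have r: "real ((n + 2) * (m + 2)) / 4 - 6 = 4*real a*real b + 4*real a + 4*real b - 2"
    unfolding n m by (simp add: algebra_simps)
  show ?thesis using g e r
    by (metis of_nat_le_iff)
qed
end
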